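(* Consider the following transition system (an abstract model of a counting network with one balancer and two counters). A state consists of a bit $b \in \{0,1\}$, natural numbers $n_0, n_1$, finite sets $\tau^0, \tau^1$ of tokens (natural numbers), and two finite maps ("histories") $H^0, H^1$ from natural numbers to pairs $(\hat\iota, z)$ where $\hat\iota$ is a finite set of tokens and $z$ is a token. Write $\mathsf{spent}(H)$ for the set of second components $z$ of entries of $H$, and $\tau = \tau^0 \cup \tau^1$. The initial state is $b = 0$, $n_0 = 0$, $n_1 = 1$, $\tau^0 = \tau^1 = \emptyset$, $H^0 = \{0 \mapsto (\{0\}, 0)\}$, $H^1 = \{1 \mapsto (\{1\}, 1)\}$. The transitions are: (Flip) choose a token $z \notin \tau^0 \cup \tau^1 \cup \mathsf{spent}(H^0) \cup \mathsf{spent}(H^1)$, add $z$ to $\tau^{b}$, and set $b := 1 - b$; (Increment) for $i \in \{0,1\}$ and a token $z \in \tau^i$: add the entry $(n_i + 2) \mapsto (\tau^0 \cup \tau^1, z)$ to $H^i$ (the set $\tau^0 \cup \tau^1$ taken before removing $z$), remove $z$ from $\tau^i$, and set $n_i := n_i + 2$. Then every state reachable from the initial state by finitely many transitions satisfies: (1) $|H^0| + |\tau^0| = |H^1| + |\tau^1| + b$; (2) $\mathrm{dom}\,H^0 = \{0, 2, 4, \dots, n_0\}$ and $\mathrm{dom}\,H^1 = \{1, 3, 5, \dots, n_1\}$; (3) the sets $\tau^0$, $\tau^1$, $\mathsf{spent}(H^0) \cup \mathsf{spent}(H^1)$ are pairwise disjoint; (4) for every entry $t \mapsto (\hat\iota,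 z)$ of $H^0$ or $H^1$, $z \in \hat\iota$; (5) for every entry $t \mapsto (\hat\iota, z)$ of $H^0$: $t + 2|\hat\iota \cap \tau^0| < n_1 + 2|\hat\iota \cap \tau^1| + 2$; and for every entry $t \mapsto (\hat\iota, z)$ of $H^1$: $t + 2|\hat\iota \cap \tau^1| < n_0 + 2|\hat\iota \cap \tau^0| + 2$.
   Context: $|S|$ denotes the cardinality of a finite set or the number of entries of a finite map $S$. Tokens are natural numbers. The model corresponds to a counter implementation in which a balancer bit $b$ directs each incrementing thread to counter $c_0$ (holding even values $n_0$) or $c_1$ (holding odd values $n_1$); a "flip" issues a token for the counter indicated by the old value of $b$, and an "increment" spends such a token to add 2 to that counter, recording the new value together with a snapshot of the currently outstanding tokens. *)

theory Defs
  imports Main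
begin

text \<open>Histories: finite maps from natural numbers to pairs (iota-hat, z).
  The cardinality of a history H is the number of its entries, card (dom H).\<close>
type_synonym history = "nat \<rightharpoonup> (nat set \<times> nat)"

record cstate =
  bit :: nat
  n0 :: nat
  n1 :: nat
  tok0 :: "nat set"
  tok1 :: "nat set"
  H0 :: history
  H1 :: history

definition spent :: "history \<Rightarrow> nat set" where
  "spent H = snd ` ran H"

definition init_state :: cstate where
  "init_state = \<lparr> bit = 0, n0 = 0, n1 = 1, tok0 = {}, tok1 = {},
     H0 = [0 \<mapsto> ({0}, 0)], H1 = [1 \<mapsto> ({1}, 1)] \<rparr>"

inductive reachable :: "cstate \<Rightarrow> bool" where
  init: "reachable init_state"
| flip: "reachable s \<Longrightarrow>
     z \<notin> tok0 s \<union> tok1 s \<union> spent (H0 s) \<union> spent (H1 s) \<Longrightarrow>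
     reachable (if bit s = 0
                then s\<lparr> tok0 := insert z (tok0 s), bit := 1 - bit s \<rparr>
                else s\<lparr> tok1 := insert z (tok1 s), bit := 1 - bit s \<rparr>)"
| inc0: "reachable s \<Longrightarrow> z \<in> tok0 s \<Longrightarrow>
     reachable (s\<lparr> H0 := (H0 s)(n0 s + 2 \<mapsto> (tok0 s \<union> tok1 s, z)),
                  tok0 := tok0 s - {z}, n0 := n0 s + 2 \<rparr>)"
| inc1: "reachable s \<Longrightarrow> z \<in> tok1 s \<Longrightarrow>
     reachable (s\<lparr> H1 := (H1 s)(n1 s + 2 \<mapsto> (tok0 s \<union> tok1 s, z)),
                  tok1 := tok1 s - {z}, n1 := n1 s + 2 \<rparr>)"

end

theory Submission
  imports Defs
begin

definition cinv :: "cstate \<Rightarrow> bool" where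
  "cinv s \<longleftrightarrow> card (dom (H0 s)) + card (tok0 s) = card (dom (H1 s)) + card (tok1 s) + bit s
    \<and> dom (H0 s) = {k. even k \<and> k \<le> n0 s}
    \<and> dom (H1 s) = {k. odd k \<and> k \<le> n1 s}
    \<and> tok0 s \<inter> tok1 s = {}
    \<and> tok0 s \<inter> (spent (H0 s) \<union> spent (H1 s)) = {}
    \<and> tok1 s \<inter> (spent (H0 s) \<union> spent (H1 s)) = {}
    \<and> (\<forall>t I z. (H0 s t = Some (I, z) \<or> H1 s t = Some (I, z)) \<longrightarrow> z \<in> I)
    \<and> (\<forall>t I z. H0 s t = Some (I, z) \<longrightarrow>
          t + 2 * card (I \<inter> tok0 s) < n1 s + 2 * card (I \<inter> tok1 s) + 2)
    \<and> (\<forall>t I z. H1 s t = Some (I, z) \<longrightarrow>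
          t + 2 * card (I \<inter> tok1 s) < n0 s + 2 * card (I \<inter> tok0 s) + 2)
    \<and> bit s \<le> 1 \<and> even (n0 s) \<and> odd (n1 s) \<and> finite (tok0 s) \<and> finite (tok1 s)
    \<and> 2 * card (dom (H0 s)) = n0 s + 2 \<and> 2 * card (dom (H1 s)) = n1 s + 1
    \<and> (\<forall>t I z. (H0 s t = Some (I, z) \<or> H1 s t = Some (I, z)) \<longrightarrow>
          I \<subseteq> tok0 s \<union> tok1 s \<union> spent (H0 s) \<union> spent (H1 s))"

lemma spent_iff: "z \<in> spent H \<longleftrightarrow> (\<exists>t I. H t = Some (I, z))"
  unfolding spent_def ran_def by force

lemma spent_upd: "H k = None \<Longrightarrow> spent (H(k \<mapsto> (I, z))) = insert z (spent H)"
  unfolding spent_def by (simp add: ran_map_upd)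

lemma inv_init: "cinv init_state"
  unfolding cinv_def init_state_def spent_def
  by (auto simp: ran_def split: if_splits; presburger)

lemma inv_inc0:
  assumes "cinv s" "z \<in> tok0 s"
  shows "cinv (s\<lparr> H0 := (H0 s)(n0 s + 2 \<mapsto> (tok0 s \<union> tok1 s, z)),
                  tok0 := tok0 s - {z}, n0 := n0 s + 2 \<rparr>)"
proof -
  let ?T0 = "tok0 s" and ?T1 = "tok1 s" and ?A = "spent (H0 s)" and ?B = "spent (H1 s)"
  obtain c1: "card (dom (H0 s)) + card ?T0 = card (dom (H1 s)) + card ?T1 + bit s"
   and d0: "dom (H0 s) = {k. even k \<and> k \<le> n0 s}"
   and d1: "dom (H1 s) = {k. odd k \<and> k \<le> n1 s}"
   and j1: "?T0 \<inter> ?T1 = {}" and j2: "?T0 \<inter> (?A \<union> ?B) = {}" and j3: "?T1 \<inter> (?A \<union> ?B) = {}"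
   and zI: "\<forall>t I z. (H0 s t = Some (I, z) \<or> H1 s t = Some (I, z)) \<longrightarrow> z \<in> I"
   and p0: "\<forall>t I z. H0 s t = Some (I, z) \<longrightarrow>
          t + 2 * card (I \<inter> ?T0) < n1 s + 2 * card (I \<inter> ?T1) + 2"
   and p1: "\<forall>t I z. H1 s t = Some (I, z) \<longrightarrow>
          t + 2 * card (I \<inter> ?T1) < n0 s + 2 * card (I \<inter> ?T0) + 2"
   and b1: "bit s \<le> 1" and e0: "even (n0 s)" and e1: "odd (n1 s)"
   and f0: "finite ?T0" and f1: "finite ?T1"
   and k0: "2 * card (dom (H0 s)) = n0 s + 2" and k1: "2 * card (dom (H1 s)) = n1 s + 1"
   and sub: "\<forall>t I z. (H0 s t = Some (I, z) \<or> H1 s t = Some (I, z)) \<longrightarrow>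
          I \<subseteq> ?T0 \<union> ?T1 \<union> ?A \<union> ?B"
    by (insert assms(1), unfold cinv_def, elim conjE, rule that, assumption+)
  have "n0 s + 2 \<notin> dom (H0 s)" using d0 by simp
  then have new: "H0 s (n0 s + 2) = None" by (simp only: domIff not_not)
  have sp: "spent ((H0 s)(n0 s + 2 \<mapsto> (?T0 \<union> ?T1, z))) = insert z ?A"
    using new by (rule spent_upd)
  have "dom (H0 s) \<subseteq> {..n0 s}" using d0 by auto
  then have fd0: "finite (dom (H0 s))" using finite_subset by blast
  have cd: "card (dom ((H0 s)(n0 s + 2 \<mapsto> (?T0 \<union> ?T1, z)))) = card (dom (H0 s)) + 1"
    using new fd0 by (simp add: domIff)
  have ct: "card (?T0 - {z}) = card ?T0 - 1" using assms(2) f0 by simp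
  have ct1: "card ?T0 \<ge> 1" using assms(2) f0 by (metis One_nat_def Suc_leI card_gt_0_iff empty_iff)
  have zT1: "z \<notin> ?T1" using j1 assms(2) by blast
  have dnew: "insert (n0 s + 2) {k. even k \<and> k \<le> n0 s} = {k. even k \<and> k \<le> n0 s + 2}"
    using e0 by (auto; presburger)
  have le1: "card (I \<inter> (?T0 - {z})) \<le> card (I \<inter> ?T0)" for I
    using f0 by (intro card_mono) auto
  have le2: "card (I \<inter> ?T0) \<le> card (I \<inter> (?T0 - {z})) + 1" for I
  proof -
    have "card (I \<inter> ?T0) \<le> card (insert z (I \<inter> (?T0 - {z})))"
      using f0 by (intro card_mono) auto
    also have "\<dots> \<le> card (I \<inter> (?T0 - {z})) + 1" using f0 by (simp add: card_insert_if)
    finally show ?thesis .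
  qed
  have eqI: "(?T0 \<union> ?T1) \<inter> (?T0 - {z}) = ?T0 - {z}" "(?T0 \<union> ?T1) \<inter> ?T1 = ?T1" by auto
  define s' where "s' = s\<lparr> H0 := (H0 s)(n0 s + 2 \<mapsto> (tok0 s \<union> tok1 s, z)),
                  tok0 := tok0 s - {z}, n0 := n0 s + 2 \<rparr>"
  have r: "H0 s' = (H0 s)(n0 s + 2 \<mapsto> (tok0 s \<union> tok1 s, z))" "H1 s' = H1 s"
    "tok0 s' = ?T0 - {z}" "tok1 s' = ?T1" "n0 s' = n0 s + 2" "n1 s' = n1 s" "bit s' = bit s"
    unfolding s'_def by simp_all
  show ?thesis unfolding s'_def[symmetric] cinv_def
    apply (simp only: r sp cd ct eqI)
    apply (intro conjI)
    subgoal using c1 ct1 by simp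
    subgoal using d0 dnew by simp
    subgoal using d1 by simp
    subgoal using j1 by blast
    subgoal using j2 by blast
    subgoal using j3 zT1 by blast
    subgoal using zI assms(2) by auto
    subgoal
    proof (intro allI impI)
      fix t I z' assume h: "((H0 s)(n0 s + 2 \<mapsto> (?T0 \<union> ?T1, z))) t = Some (I, z')"
      show "t + 2 * card (I \<inter> (?T0 - {z})) < n1 s + 2 * card (I \<inter> ?T1) + 2"
      proof (cases "t = n0 s + 2")
        case True
        with h have I: "I = ?T0 \<union> ?T1" by simp
        have "card (I \<inter> (?T0 - {z})) = card ?T0 - 1" using I eqI ct by simp
        moreover have "card (I \<inter> ?T1) = card ?T1" using I by (simp add: Int_absorb1)
        ultimately show ?thesis using True c1 k0 k1 b1 ct1 by linarith
      next
        case False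
        with h have "H0 s t = Some (I,z')" by simp
        then show ?thesis using p0 le1[of I] by fastforce
      qed
    qed
    subgoal
    proof (intro allI impI)
      fix t I z' assume h: "H1 s t = Some (I, z')"
      have "t + 2 * card (I \<inter> ?T1) < n0 s + 2 * card (I \<inter> ?T0) + 2" using p1 h by blast
      then show "t + 2 * card (I \<inter> ?T1) < n0 s + 2 + 2 * card (I \<inter> (?T0 - {z})) + 2"
        using le2[of I] by linarith
    qed
    subgoal using b1 by simp
    subgoal using e0 by simp
    subgoal using e1 by simp
    subgoal using f0 by simp
    subgoal using f1 by simp
    subgoal using k0 by simp
    subgoal using k1 by simp
    subgoal using sub assms(2) by (fastforce split: if_splits)
    done
qed

lemma inv_inc1:
  assumes "cinv s" "z \<in> tok1 s"
  shows "cinv (s\<lparr> H1 := (H1 s)(n1 s + 2 \<mapsto> (tok0 s \<union> tok1 s, z)),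
                  tok1 := tok1 s - {z}, n1 := n1 s + 2 \<rparr>)"
proof -
  let ?T0 = "tok0 s" and ?T1 = "tok1 s" and ?A = "spent (H0 s)" and ?B = "spent (H1 s)"
  obtain c1: "card (dom (H0 s)) + card ?T0 = card (dom (H1 s)) + card ?T1 + bit s"
   and d0: "dom (H0 s) = {k. even k \<and> k \<le> n0 s}"
   and d1: "dom (H1 s) = {k. odd k \<and> k \<le> n1 s}"
   and j1: "?T0 \<inter> ?T1 = {}" and j2: "?T0 \<inter> (?A \<union> ?B) = {}" and j3: "?T1 \<inter> (?A \<union> ?B) = {}"
   and zI: "\<forall>t I z. (H0 s t = Some (I, z) \<or> H1 s t = Some (I, z)) \<longrightarrow> z \<in> I"
   and p0: "\<forall>t I z. H0 s t = Some (I, z) \<longrightarrow>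
          t + 2 * card (I \<inter> ?T0) < n1 s + 2 * card (I \<inter> ?T1) + 2"
   and p1: "\<forall>t I z. H1 s t = Some (I, z) \<longrightarrow>
          t + 2 * card (I \<inter> ?T1) < n0 s + 2 * card (I \<inter> ?T0) + 2"
   and b1: "bit s \<le> 1" and e0: "even (n0 s)" and e1: "odd (n1 s)"
   and f0: "finite ?T0" and f1: "finite ?T1"
   and k0: "2 * card (dom (H0 s)) = n0 s + 2" and k1: "2 * card (dom (H1 s)) = n1 s + 1"
   and sub: "\<forall>t I z. (H0 s t = Some (I, z) \<or> H1 s t = Some (I, z)) \<longrightarrow>
          I \<subseteq> ?T0 \<union> ?T1 \<union> ?A \<union> ?B"
    by (insert assms(1), unfold cinv_def, elim conjE, rule that, assumption+)
  have "n1 s + 2 \<notin> dom (H1 s)" using d1 by simp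
  then have new: "H1 s (n1 s + 2) = None" by (simp only: domIff not_not)
  have sp: "spent ((H1 s)(n1 s + 2 \<mapsto> (?T0 \<union> ?T1, z))) = insert z ?B"
    using new by (rule spent_upd)
  have "dom (H1 s) \<subseteq> {..n1 s}" using d1 by auto
  then have fd1: "finite (dom (H1 s))" using finite_subset by blast
  have cd: "card (dom ((H1 s)(n1 s + 2 \<mapsto> (?T0 \<union> ?T1, z)))) = card (dom (H1 s)) + 1"
    using new fd1 by (simp add: domIff)
  have ct: "card (?T1 - {z}) = card ?T1 - 1" using assms(2) f1 by simp
  have ct1: "card ?T1 \<ge> 1" using assms(2) f1 by (metis One_nat_def Suc_leI card_gt_0_iff empty_iff)
  have zT0: "z \<notin> ?T0" using j1 assms(2) by blast
  have dnew: "insert (n1 s + 2) {k. odd k \<and> k \<le> n1 s} = {k. odd k \<and> k \<le> n1 s + 2}"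
    using e1 by (auto; presburger)
  have le1: "card (I \<inter> (?T1 - {z})) \<le> card (I \<inter> ?T1)" for I
    using f1 by (intro card_mono) auto
  have le2: "card (I \<inter> ?T1) \<le> card (I \<inter> (?T1 - {z})) + 1" for I
  proof -
    have "card (I \<inter> ?T1) \<le> card (insert z (I \<inter> (?T1 - {z})))"
      using f1 by (intro card_mono) auto
    also have "\<dots> \<le> card (I \<inter> (?T1 - {z})) + 1" using f1 by (simp add: card_insert_if)
    finally show ?thesis .
  qed
  have eqI: "(?T0 \<union> ?T1) \<inter> (?T1 - {z}) = ?T1 - {z}" "(?T0 \<union> ?T1) \<inter> ?T0 = ?T0" by auto
  define s' where "s' = s\<lparr> H1 := (H1 s)(n1 s + 2 \<mapsto> (tok0 s \<union> tok1 s, z)),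
                  tok1 := tok1 s - {z}, n1 := n1 s + 2 \<rparr>"
  have r: "H1 s' = (H1 s)(n1 s + 2 \<mapsto> (tok0 s \<union> tok1 s, z))" "H0 s' = H0 s"
    "tok1 s' = ?T1 - {z}" "tok0 s' = ?T0" "n1 s' = n1 s + 2" "n0 s' = n0 s" "bit s' = bit s"
    unfolding s'_def by simp_all
  show ?thesis unfolding s'_def[symmetric] cinv_def
    apply (simp only: r sp cd ct eqI)
    apply (intro conjI)
    subgoal using c1 ct1 by simp
    subgoal using d0 by simp
    subgoal using d1 dnew by simp
    subgoal using j1 by blast
    subgoal using j2 zT0 by blast
    subgoal using j3 by blast
    subgoal using zI assms(2) by auto
    subgoal
    proof (intro allI impI)
      fix t I z' assume h: "H0 s t = Some (I, z')"
      have "t + 2 * card (I \<inter> ?T0) < n1 s + 2 * card (I \<inter> ?T1) + 2" using p0 h by blast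
      then show "t + 2 * card (I \<inter> ?T0) < n1 s + 2 + 2 * card (I \<inter> (?T1 - {z})) + 2"
        using le2[of I] by linarith
    qed
    subgoal
    proof (intro allI impI)
      fix t I z' assume h: "((H1 s)(n1 s + 2 \<mapsto> (?T0 \<union> ?T1, z))) t = Some (I, z')"
      show "t + 2 * card (I \<inter> (?T1 - {z})) < n0 s + 2 * card (I \<inter> ?T0) + 2"
      proof (cases "t = n1 s + 2")
        case True
        with h have I: "I = ?T0 \<union> ?T1" by simp
        have "card (I \<inter> (?T1 - {z})) = card ?T1 - 1" using I eqI ct by simp
        moreover have "card (I \<inter> ?T0) = card ?T0" using I by (simp add: Int_absorb1)
        ultimately show ?thesis using True c1 k0 k1 b1 ct1 by linarith
      next
        case False
        with h have "H1 s t = Some (I,z')" by simp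
        then show ?thesis using p1 le1[of I] by fastforce
      qed
    qed
    subgoal using b1 by simp
    subgoal using e0 by simp
    subgoal using e1 by simp
    subgoal using f0 by simp
    subgoal using f1 by simp
    subgoal using k0 by simp
    subgoal using k1 by simp
    subgoal using sub assms(2) by (fastforce split: if_splits)
    done
qed

lemma inv_flip:
  assumes "cinv s" "z \<notin> tok0 s \<union> tok1 s \<union> spent (H0 s) \<union> spent (H1 s)"
  shows "cinv (if bit s = 0
                then s\<lparr> tok0 := insert z (tok0 s), bit := 1 - bit s \<rparr>
                else s\<lparr> tok1 := insert z (tok1 s), bit := 1 - bit s \<rparr>)"
proof -
  let ?T0 = "tok0 s" and ?T1 = "tok1 s" and ?A = "spent (H0 s)" and ?B = "spent (H1 s)"
  obtain c1: "card (dom (H0 s)) + card ?T0 = card (dom (H1 s)) + card ?T1 + bit s"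
   and d0: "dom (H0 s) = {k. even k \<and> k \<le> n0 s}"
   and d1: "dom (H1 s) = {k. odd k \<and> k \<le> n1 s}"
   and j1: "?T0 \<inter> ?T1 = {}" and j2: "?T0 \<inter> (?A \<union> ?B) = {}" and j3: "?T1 \<inter> (?A \<union> ?B) = {}"
   and zI: "\<forall>t I z. (H0 s t = Some (I, z) \<or> H1 s t = Some (I, z)) \<longrightarrow> z \<in> I"
   and p0: "\<forall>t I z. H0 s t = Some (I, z) \<longrightarrow>
          t + 2 * card (I \<inter> ?T0) < n1 s + 2 * card (I \<inter> ?T1) + 2"
   and p1: "\<forall>t I z. H1 s t = Some (I, z) \<longrightarrow>
          t + 2 * card (I \<inter> ?T1) < n0 s + 2 * card (I \<inter> ?T0) + 2"
   and b1: "bit s \<le> 1" and e0: "even (n0 s)" and e1: "odd (n1 s)"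
   and f0: "finite ?T0" and f1: "finite ?T1"
   and k0: "2 * card (dom (H0 s)) = n0 s + 2" and k1: "2 * card (dom (H1 s)) = n1 s + 1"
   and sub: "\<forall>t I z. (H0 s t = Some (I, z) \<or> H1 s t = Some (I, z)) \<longrightarrow>
          I \<subseteq> ?T0 \<union> ?T1 \<union> ?A \<union> ?B"
    by (insert assms(1), unfold cinv_def, elim conjE, rule that, assumption+)
  have zI': "z \<notin> I" if "H0 s t = Some (I, z') \<or> H1 s t = Some (I, z')" for t I z'
    using sub that assms(2) by blast
  have zn: "z \<notin> ?T0" "z \<notin> ?T1" "z \<notin> ?A" "z \<notin> ?B" using assms(2) by auto
  have ins: "I \<inter> insert z T = I \<inter> T" if "z \<notin> I" for I T using that by auto
  show ?thesis
  proof (cases "bit s = 0")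
    case True
    define s' where "s' = s\<lparr> tok0 := insert z (tok0 s), bit := 1 - bit s \<rparr>"
    have r: "H1 s' = H1 s" "H0 s' = H0 s"
      "tok1 s' = ?T1" "tok0 s' = insert z ?T0" "n1 s' = n1 s" "n0 s' = n0 s" "bit s' = 1"
      unfolding s'_def using True by simp_all
    have ct: "card (insert z ?T0) = card ?T0 + 1" using f0 zn by simp
    have eq: "(if bit s = 0
                then s\<lparr> tok0 := insert z (tok0 s), bit := 1 - bit s \<rparr>
                else s\<lparr> tok1 := insert z (tok1 s), bit := 1 - bit s \<rparr>) = s'" unfolding s'_def using True by simp
    show ?thesis unfolding eq cinv_def
      apply (simp only: r ct)
      apply (intro conjI)
      subgoal using c1 True by simp
      subgoal using d0 by simp
      subgoal using d1 by simp
      subgoal using j1 zn by blast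
      subgoal using j2 zn by blast
      subgoal using j3 by blast
      subgoal using zI by blast
      subgoal using p0 zI' ins by metis
      subgoal using p1 zI' ins by metis
      subgoal by simp
      subgoal using e0 by simp
      subgoal using e1 by simp
      subgoal using f0 by simp
      subgoal using f1 by simp
      subgoal using k0 by simp
      subgoal using k1 by simp
      subgoal using sub by blast
      done
  next
    case False
    define s' where "s' = s\<lparr> tok1 := insert z (tok1 s), bit := 1 - bit s \<rparr>"
    have r: "H1 s' = H1 s" "H0 s' = H0 s"
      "tok1 s' = insert z ?T1" "tok0 s' = ?T0" "n1 s' = n1 s" "n0 s' = n0 s" "bit s' = 0"
      unfolding s'_def using False b1 by simp_all
    have ct: "card (insert z ?T1) = card ?T1 + 1" using f1 zn by simp
    have eq: "(if bit s = 0
                then s\<lparr> tok0 := insert z (tok0 s), bit := 1 - bit s \<rparr>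
                else s\<lparr> tok1 := insert z (tok1 s), bit := 1 - bit s \<rparr>) = s'" unfolding s'_def using False by simp
    show ?thesis unfolding eq cinv_def
      apply (simp only: r ct)
      apply (intro conjI)
      subgoal using c1 False b1 by simp
      subgoal using d0 by simp
      subgoal using d1 by simp
      subgoal using j1 zn by blast
      subgoal using j2 by blast
      subgoal using j3 zn by blast
      subgoal using zI by blast
      subgoal using p0 zI' ins by metis
      subgoal using p1 zI' ins by metis
      subgoal by simp
      subgoal using e0 by simp
      subgoal using e1 by simp
      subgoal using f0 by simp
      subgoal using f1 by simp
      subgoal using k0 by simp
      subgoal using k1 by simp
      subgoal using sub by blast
      done
  qed
qed

lemma reach_cinv: "reachable s \<Longrightarrow> cinv s"
proof (induction rule: reachable.induct)
  case init show ?case by (rule inv_init)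
next
  case (flip s z) then show ?case using inv_flip by blast
next
  case (inc0 s z) then show ?case using inv_inc0 by blast
next
  case (inc1 s z) then show ?case using inv_inc1 by blast
qed

theorem mainTheorem4:
  assumes "reachable s"
  shows "card (dom (H0 s)) + card (tok0 s) = card (dom (H1 s)) + card (tok1 s) + bit s
    \<and> dom (H0 s) = {k. even k \<and> k \<le> n0 s}
    \<and> dom (H1 s) = {k. odd k \<and> k \<le> n1 s}
    \<and> tok0 s \<inter> tok1 s = {}
    \<and> tok0 s \<inter> (spent (H0 s) \<union> spent (H1 s)) = {}
    \<and> tok1 s \<inter> (spent (H0 s) \<union> spent (H1 s)) = {}
    \<and> (\<forall>t I z. (H0 s t = Some (I, z) \<or> H1 s t = Some (I, z)) \<longrightarrow> z \<in> I)
    \<and> (\<forall>t I z. H0 s t = Some (I, z) \<longrightarrow>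
          t + 2 * card (I \<inter> tok0 s) < n1 s + 2 * card (I \<inter> tok1 s) + 2)
    \<and> (\<forall>t I z. H1 s t = Some (I, z) \<longrightarrow>
          t + 2 * card (I \<inter> tok1 s) < n0 s + 2 * card (I \<inter> tok0 s) + 2)"
  using reach_cinv[OF assms] unfolding cinv_def by (elim conjE) (intro conjI; assumption)


end
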